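(* Let $G$ be an infinite, connected, vertex-transitive, smallish graph in which every vertex has degree $k$, with a unit resistor on each edge. Then for every vertex $v$ of $G$, $$\sum_{x\sim v} R_{vx} = 2.$$
   Context: $x\sim y$ means $x$ and $y$ are adjacent. $R_{xy}$ denotes the effective electrical resistance between $x,y$ with unit resistance on every edge. Vertex transitive: for any two vertices there is a graph automorphism mapping one to the other. Smallish: $G$ has bounded degree and there are finite subgraphs $G_m\subseteq G_{m+1}$ with $\bigcup_m G_m=G$ and $|\mathrm{boundary}(G_m)|/|G_m|\to0$ (number of boundary vertices of $G_m$, i.e. those adjacent to vertices outside $G_m$, over number of vertices of $G_m$). *)

theory Defs
  imports "HOL-Analysis.Analysis"
begin

definition simple_graph :: "('a \<Rightarrow> 'a \<Rightarrow> bool) \<Rightarrow> bool" where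
  "simple_graph E \<longleftrightarrow> (\<forall>x y. E x y \<longrightarrow> E y x) \<and> (\<forall>x. \<not> E x x)"

definition connected_graph :: "('a \<Rightarrow> 'a \<Rightarrow> bool) \<Rightarrow> bool" where
  "connected_graph E \<longleftrightarrow> (\<forall>x y. E\<^sup>*\<^sup>* x y)"

definition neighbours :: "('a \<Rightarrow> 'a \<Rightarrow> bool) \<Rightarrow> 'a \<Rightarrow> 'a set" where
  "neighbours E v = {w. E v w}"

definition regular_graph :: "('a \<Rightarrow> 'a \<Rightarrow> bool) \<Rightarrow> nat \<Rightarrow> bool" where
  "regular_graph E k \<longleftrightarrow> (\<forall>v. finite (neighbours E v) \<and> card (neighbours E v) = k)"

definition graph_automorphism :: "('a \<Rightarrow> 'a \<Rightarrow> bool) \<Rightarrow> ('a \<Rightarrow> 'a) \<Rightarrow> bool" where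
  "graph_automorphism E \<sigma> \<longleftrightarrow> bij \<sigma> \<and> (\<forall>u w. E u w \<longleftrightarrow> E (\<sigma> u) (\<sigma> w))"

definition vertex_transitive :: "('a \<Rightarrow> 'a \<Rightarrow> bool) \<Rightarrow> bool" where
  "vertex_transitive E \<longleftrightarrow> (\<forall>x y. \<exists>\<sigma>. graph_automorphism E \<sigma> \<and> \<sigma> x = y)"

definition bounded_degree :: "('a \<Rightarrow> 'a \<Rightarrow> bool) \<Rightarrow> bool" where
  "bounded_degree E \<longleftrightarrow> (\<exists>D::nat. \<forall>v. finite (neighbours E v) \<and> card (neighbours E v) \<le> D)"

definition boundary :: "('a \<Rightarrow> 'a \<Rightarrow> bool) \<Rightarrow> 'a set \<Rightarrow> 'a set" where
  "boundary E S = {v \<in> S. \<exists>w. E v w \<and> w \<notin> S}"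

definition smallish :: "('a \<Rightarrow> 'a \<Rightarrow> bool) \<Rightarrow> bool" where
  "smallish E \<longleftrightarrow> bounded_degree E \<and>
     (\<exists>G :: nat \<Rightarrow> 'a set. (\<forall>m. finite (G m) \<and> G m \<subseteq> G (Suc m)) \<and> (\<Union>m. G m) = UNIV \<and>
        (\<lambda>m. real (card (boundary E (G m))) / real (card (G m))) \<longlonglongrightarrow> 0)"

text \<open>Dirichlet energy of f with unit conductances: sum over (unoriented) edges of (f u - f w)^2;
  the sum over ordered adjacent pairs counts each edge twice.\<close>
definition dirichlet_energy :: "('a \<Rightarrow> 'a \<Rightarrow> bool) \<Rightarrow> ('a \<Rightarrow> real) \<Rightarrow> ennreal" where
  "dirichlet_energy E f =
     ennreal (1/2) * (\<Sum>\<^sub>\<infinity>(u,w)\<in>{(u,w). E u w}. ennreal ((f u - f w)^2))"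

text \<open>Effective conductance (Dirichlet principle); on an infinite graph this is the
  free effective conductance, i.e. the limit of the effective conductances of an exhaustion
  by finite subgraphs.\<close>
definition eff_conductance :: "('a \<Rightarrow> 'a \<Rightarrow> bool) \<Rightarrow> 'a \<Rightarrow> 'a \<Rightarrow> ennreal" where
  "eff_conductance E x y = (INF f \<in> {f. f x = 1 \<and> f y = 0}. dirichlet_energy E f)"

definition eff_resistance :: "('a \<Rightarrow> 'a \<Rightarrow> bool) \<Rightarrow> 'a \<Rightarrow> 'a \<Rightarrow> real" where
  "eff_resistance E x y = 1 / enn2real (eff_conductance E x y)"

end

theory Submission
  imports Defs
begin


definition D :: "('a \<times> 'a) \<Rightarrow> ('a \<Rightarrow> real) \<Rightarrow> real" where
  "D p f = f (fst p) - f (snd p)"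

lemma sum_ennreal_eq: "(\<And>x. x \<in> P \<Longrightarrow> 0 \<le> g x) \<Longrightarrow> (\<Sum>x\<in>P. ennreal (g x)) = ennreal (\<Sum>x\<in>P. g x)"
  by (simp add: sum_ennreal)

lemma energy_ge:
  assumes "finite P" "P \<subseteq> {(u,w). E u w}"
  shows "ennreal (1/2 * (\<Sum>p\<in>P. (D p f)^2)) \<le> dirichlet_energy E f"
proof -
  have "(\<Sum>p\<in>P. ennreal ((D p f)^2)) = infsum (\<lambda>(u,w). ennreal ((f u - f w)^2)) P"
    using assms(1) by (simp add: D_def case_prod_beta)
  also have "\<dots> \<le> infsum (\<lambda>(u,w). ennreal ((f u - f w)^2)) {(u,w). E u w}"
    by (rule infsum_mono_neutral) (use assms(2) in \<open>auto intro: nonneg_summable_on_complete\<close>)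
  finally have "ennreal (\<Sum>p\<in>P. (D p f)^2) \<le> infsum (\<lambda>(u,w). ennreal ((f u - f w)^2)) {(u,w). E u w}"
    by (simp add: sum_ennreal)
  then show ?thesis unfolding dirichlet_energy_def
    by (metis ennreal_mult' mult_left_mono zero_le_divide_1_iff zero_le_numeral zero_le)
qed

lemma energy_eq:
  assumes "finite P" "P \<subseteq> {(u,w). E u w}" "\<And>p. p \<in> {(u,w). E u w} - P \<Longrightarrow> D p f = 0"
  shows "dirichlet_energy E f = ennreal (1/2 * (\<Sum>p\<in>P. (D p f)^2))"
proof -
  have "infsum (\<lambda>(u,w). ennreal ((f u - f w)^2)) {(u,w). E u w} = infsum (\<lambda>(u,w). ennreal ((f u - f w)^2)) P"
    by (rule infsum_cong_neutral) (use assms in \<open>auto simp: D_def\<close>)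
  also have "\<dots> = (\<Sum>p\<in>P. ennreal ((D p f)^2))"
    using assms(1) by (simp add: D_def case_prod_beta)
  also have "\<dots> = ennreal (\<Sum>p\<in>P. (D p f)^2)" by (simp add: sum_ennreal)
  finally show ?thesis unfolding dirichlet_energy_def
    by (metis ennreal_mult' zero_le_divide_1_iff zero_le_numeral)
qed



definition BB :: "('a \<times> 'a) set \<Rightarrow> ('a \<Rightarrow> real) \<Rightarrow> ('a \<Rightarrow> real) \<Rightarrow> real" where
  "BB P f g = (\<Sum>p\<in>P. D p f * D p g)"

definition ON :: "('a \<times> 'a) set \<Rightarrow> (nat \<Rightarrow> 'a \<Rightarrow> real) \<Rightarrow> nat \<Rightarrow> bool" where
  "ON P fs r \<longleftrightarrow> (\<forall>i<r. \<forall>j<r. BB P (fs i) (fs j) = (if i = j then 1 else 0))"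

definition lc :: "(nat \<Rightarrow> real) \<Rightarrow> (nat \<Rightarrow> 'a \<Rightarrow> real) \<Rightarrow> nat \<Rightarrow> 'a \<Rightarrow> real" where
  "lc c fs r = (\<lambda>y. \<Sum>i<r. c i * fs i y)"

definition ind :: "'a \<Rightarrow> 'a \<Rightarrow> real" where "ind x = (\<lambda>y. if y = x then 1 else 0)"

definition pos :: "('a \<times> 'a) set \<Rightarrow> 'a set \<Rightarrow> bool" where
  "pos P T \<longleftrightarrow> (\<forall>g. (\<forall>y. y \<notin> T \<longrightarrow> g y = 0) \<longrightarrow> (\<forall>p\<in>P. D p g = 0) \<longrightarrow> (\<forall>y. g y = 0))"

lemma D_lc: "D p (lc c fs r) = (\<Sum>i<r. c i * D p (fs i))"
  by (simp add: D_def lc_def sum_subtractf[symmetric] right_diff_distrib)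

lemma D_diff: "D p (\<lambda>y. f y - g y) = D p f - D p g" by (simp add: D_def)
lemma D_scale: "D p (\<lambda>y. f y / s) = D p f / s" by (simp add: D_def diff_divide_distrib)

lemma BB_sym: "BB P f g = BB P g f" by (simp add: BB_def mult.commute)

lemma BB_lc: "BB P (lc c fs r) g = (\<Sum>i<r. c i * BB P (fs i) g)"
  by (simp add: BB_def D_lc sum_distrib_left sum_distrib_right sum.swap[of _ P] mult.assoc)

lemma BB_diff: "BB P (\<lambda>y. f y - h y) g = BB P f g - BB P h g"
  by (simp add: BB_def D_diff left_diff_distrib sum_subtractf)

lemma BB_scale: "BB P (\<lambda>y. f y / s) g = BB P f g / s"
  by (simp add: BB_def D_scale sum_divide_distrib)

lemma ON_lc: assumes "ON P fs r" "j < r" shows "BB P (lc c fs r) (fs j) = c j"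
proof -
  have "BB P (lc c fs r) (fs j) = (\<Sum>i<r. c i * (if i = j then 1 else 0))"
    using assms by (simp add: BB_lc ON_def)
  also have "\<dots> = c j" using assms(2) by (simp add: if_distrib sum.delta cong: if_cong)
  finally show ?thesis .
qed

lemma ON_lc_norm: assumes "ON P fs r" shows "BB P (lc c fs r) (lc c fs r) = (\<Sum>i<r. (c i)^2)"
proof -
  have "BB P (lc c fs r) (lc c fs r) = (\<Sum>i<r. c i * BB P (lc c fs r) (fs i))"
    by (simp add: BB_lc BB_sym)
  also have "\<dots> = (\<Sum>i<r. (c i)^2)"
    by (rule sum.cong) (use assms in \<open>auto simp: ON_lc power2_eq_square\<close>)
  finally show ?thesis .
qed

lemma BB_self_nonneg: "0 \<le> BB P f f" by (simp add: BB_def sum_nonneg)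

lemma BB_self_zero: assumes "finite P" "BB P f f = 0" "p \<in> P" shows "D p f = 0"
  using assms sum_nonneg_eq_0_iff[of P "\<lambda>p. D p f * D p f"] by (simp add: BB_def)

lemma GS:
  assumes "finite P" "distinct xs"
  shows "\<exists>fs r. r \<le> length xs \<and> ON P fs r \<and> (\<forall>i<r. \<forall>y. y \<notin> set xs \<longrightarrow> fs i y = 0) \<and>
     (\<forall>x\<in>set xs. \<exists>c. \<forall>p\<in>P. D p (ind x) = (\<Sum>i<r. c i * D p (fs i))) \<and>
     (pos P (set xs) \<longrightarrow> r = length xs)"
  using assms(2)
proof (induction xs)
  case Nil
  show ?case by (rule exI[of _ "\<lambda>_ _. 0"], rule exI[of _ 0]) (auto simp: ON_def pos_def ind_def)
next
  case (Cons x xs)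
  then obtain fs r where r: "r \<le> length xs" and on: "ON P fs r"
    and sup: "\<forall>i<r. \<forall>y. y \<notin> set xs \<longrightarrow> fs i y = 0"
    and sp: "\<forall>x\<in>set xs. \<exists>c. \<forall>p\<in>P. D p (ind x) = (\<Sum>i<r. c i * D p (fs i))"
    and ps: "pos P (set xs) \<longrightarrow> r = length xs" by auto
  have xn: "x \<notin> set xs" using Cons.prems by simp
  define c where "c i = BB P (ind x) (fs i)" for i
  define g where "g = (\<lambda>y. ind x y - lc c fs r y)"
  define \<beta> where "\<beta> = BB P g g"
  have gx: "g x = 1" using sup xn by (simp add: g_def lc_def ind_def)
  have gsup: "\<forall>y. y \<notin> set (x # xs) \<longrightarrow> g y = 0" using sup by (auto simp: g_def lc_def ind_def)
  have Dg: "D p (ind x) = (\<Sum>i<r. c i * D p (fs i)) + D p g" for p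
    by (simp add: g_def D_diff D_lc)
  have posm: "pos P (set (x # xs)) \<Longrightarrow> pos P (set xs)" unfolding pos_def
    by (metis list.set_intros(2))
  have gorth: "BB P g (fs j) = 0" if "j < r" for j
    using that on by (simp add: g_def BB_diff ON_lc c_def)
  show ?case
  proof (cases "\<beta> = 0")
    case True
    have D0: "\<forall>p\<in>P. D p g = 0" using BB_self_zero[OF assms(1), of g] True \<beta>_def by auto
    have "\<not> pos P (set (x # xs))" using gsup D0 gx unfolding pos_def by (metis zero_neq_one)
    moreover have "\<forall>y\<in>set (x#xs). \<exists>c. \<forall>p\<in>P. D p (ind y) = (\<Sum>i<r. c i * D p (fs i))"
      using sp D0 Dg by auto
    ultimately show ?thesis using r on sup by (intro exI[of _ fs] exI[of _ r]) auto
  next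
    case False
    then have bpos: "\<beta> > 0" using BB_self_nonneg \<beta>_def by (metis less_eq_real_def)
    define h where "h = (\<lambda>y. g y / sqrt \<beta>)"
    define fs' where "fs' = fs(r := h)"
    have hh: "BB P h h = 1"
    proof -
      have "BB P h h = BB P g h / sqrt \<beta>" unfolding h_def by (rule BB_scale)
      also have "BB P g h = BB P h g" by (rule BB_sym)
      also have "BB P h g = \<beta> / sqrt \<beta>" unfolding h_def \<beta>_def by (rule BB_scale)
      finally show ?thesis using bpos by (simp add: divide_divide_eq_left)
    qed
    have hj: "BB P h (fs j) = 0" if "j < r" for j using gorth[OF that] by (simp add: h_def BB_scale)
    have on': "ON P fs' (Suc r)" unfolding ON_def
    proof (intro allI impI)
      fix i j assume i: "i < Suc r" and j: "j < Suc r"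
      have fr: "fs' r = h" and fo: "\<And>l. l < r \<Longrightarrow> fs' l = fs l" by (auto simp: fs'_def)
      show "BB P (fs' i) (fs' j) = (if i = j then 1 else 0)"
      proof (cases "i = r")
        case True
        then show ?thesis
        proof (cases "j = r")
          case True
          then show ?thesis using \<open>i = r\<close> fr hh by simp
        next
          case False
          then have "j < r" using j by simp
          then show ?thesis using \<open>i = r\<close> fr fo hj False by simp
        qed
      next
        case False
        then have ir: "i < r" using i by simp
        show ?thesis
        proof (cases "j = r")
          case True
          then show ?thesis using ir fr fo hj[OF ir] BB_sym[of P h "fs i"] by simp
        next
          case False
          then have "j < r" using j by simp
          then show ?thesis using ir fo on unfolding ON_def by simp
        qed
      qed
    qed
    have sup': "\<forall>i<Suc r. \<forall>y. y \<notin> set (x#xs) \<longrightarrow> fs' i y = 0"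
      using sup gsup by (auto simp: fs'_def h_def less_Suc_eq)
    have sp': "\<forall>y\<in>set (x#xs). \<exists>c. \<forall>p\<in>P. D p (ind y) = (\<Sum>i<Suc r. c i * D p (fs' i))"
    proof
      fix y assume "y \<in> set (x#xs)"
      then consider "y = x" | "y \<in> set xs" by auto
      then show "\<exists>c. \<forall>p\<in>P. D p (ind y) = (\<Sum>i<Suc r. c i * D p (fs' i))"
      proof cases
        case 1
        have "D p (ind x) = (\<Sum>i<Suc r. (c(r := sqrt \<beta>)) i * D p (fs' i))" for p
        proof -
          have "D p g = sqrt \<beta> * D p h" using bpos by (simp add: h_def D_scale)
          moreover have "(\<Sum>i<r. (c(r := sqrt \<beta>)) i * D p (fs' i)) = (\<Sum>i<r. c i * D p (fs i))"
            by (rule sum.cong) (auto simp: fs'_def)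
          ultimately show ?thesis using Dg[of p] by (simp add: fs'_def)
        qed
        then show ?thesis using 1 by blast
      next
        case 2
        then obtain d where d: "\<forall>p\<in>P. D p (ind y) = (\<Sum>i<r. d i * D p (fs i))" using sp by blast
        have "(\<Sum>i<Suc r. (d(r := 0)) i * D p (fs' i)) = (\<Sum>i<r. d i * D p (fs i))" for p
          by (simp, rule sum.cong) (auto simp: fs'_def)
        then show ?thesis using d by metis
      qed
    qed
    show ?thesis using r on' sup' sp' ps posm
      by (intro exI[of _ fs'] exI[of _ "Suc r"]) auto
  qed
qed



lemma C_le: "f a = 1 \<Longrightarrow> f b = 0 \<Longrightarrow> eff_conductance E a b \<le> dirichlet_energy E f"
  unfolding eff_conductance_def by (rule INF_lower) auto

lemma C_ge: "(\<And>f. f a = 1 \<Longrightarrow> f b = 0 \<Longrightarrow> c \<le> dirichlet_energy E f) \<Longrightarrow> c \<le> eff_conductance E a b"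
  unfolding eff_conductance_def by (rule INF_greatest) auto

lemma C_bounds:
  assumes sg: "simple_graph E" and fin: "\<And>v. finite (neighbours E v)" and ab: "E a b"
  shows "1 \<le> eff_conductance E a b" "eff_conductance E a b < top"
proof -
  have anb: "a \<noteq> b" using sg ab unfolding simple_graph_def by auto
  have ba: "E b a" using sg ab unfolding simple_graph_def by auto
  show "1 \<le> eff_conductance E a b"
  proof (rule C_ge)
    fix f :: "'a \<Rightarrow> real" assume fa: "f a = 1" and fb: "f b = 0"
    have "ennreal (1/2 * (\<Sum>p\<in>{(a,b),(b,a)}. (D p f)^2)) \<le> dirichlet_energy E f"
      by (rule energy_ge) (use ab ba in auto)
    moreover have "(\<Sum>p\<in>{(a,b),(b,a)}. (D p f)^2) = 2" using anb fa fb by (simp add: D_def)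
    ultimately show "1 \<le> dirichlet_energy E f" by simp
  qed
  define Pa where "Pa = {p \<in> {(u,w). E u w}. fst p = a \<or> snd p = a}"
  have "Pa \<subseteq> ({a} \<times> neighbours E a) \<union> (neighbours E a \<times> {a})"
    using sg unfolding Pa_def neighbours_def simple_graph_def by auto
  then have fPa: "finite Pa" using fin by (meson finite_SigmaI finite_UnI finite_insert finite.emptyI rev_finite_subset)
  have "dirichlet_energy E (ind a) = ennreal (1/2 * (\<Sum>p\<in>Pa. (D p (ind a))^2))"
    by (rule energy_eq[OF fPa]) (auto simp: Pa_def D_def ind_def)
  moreover have "eff_conductance E a b \<le> dirichlet_energy E (ind a)"
    by (rule C_le) (use anb in \<open>auto simp: ind_def\<close>)
  ultimately show "eff_conductance E a b < top" by (simp add: order_le_less_trans)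
qed

lemma R_bounds:
  assumes sg: "simple_graph E" and fin: "\<And>v. finite (neighbours E v)" and ab: "E a b"
  shows "0 < eff_resistance E a b" "eff_resistance E a b \<le> 1"
proof -
  note cb = C_bounds[OF sg fin ab]
  have "1 \<le> enn2real (eff_conductance E a b)"
    using cb by (metis enn2real_1 enn2real_mono)
  then show "0 < eff_resistance E a b" "eff_resistance E a b \<le> 1"
    unfolding eff_resistance_def by auto
qed

lemma R_lower:
  assumes sg: "simple_graph E" and fin: "\<And>v. finite (neighbours E v)" and ab: "E a b"
    and fP: "finite P" and PA: "P \<subseteq> {(u,w). E u w}" and on: "ON P fs r"
    and out: "\<And>p i. p \<in> {(u,w). E u w} - P \<Longrightarrow> i < r \<Longrightarrow> D p (fs i) = 0"
  shows "2 * (\<Sum>i<r. (D (a,b) (fs i))^2) \<le> eff_resistance E a b"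
proof -
  define \<rho> where "\<rho> = (\<Sum>i<r. (D (a,b) (fs i))^2)"
  have R0: "0 < eff_resistance E a b" using R_bounds[OF sg fin ab] by simp
  show ?thesis
  proof (cases "\<rho> = 0")
    case True then show ?thesis using R0 \<rho>_def by simp
  next
    case False
    then have rp: "\<rho> > 0" unfolding \<rho>_def by (metis less_eq_real_def sum_nonneg zero_le_power2)
    define c where "c i = D (a,b) (fs i) / \<rho>" for i
    define h where "h = lc c fs r"
    define h' where "h' = (\<lambda>y. h y - h b)"
    have Dh': "D p h' = D p h" for p by (simp add: D_def h'_def)
    have "D (a,b) h = (\<Sum>i<r. (D (a,b) (fs i))^2) / \<rho>"
      by (simp add: h_def D_lc c_def power2_eq_square sum_divide_distrib)
    then have Dab: "D (a,b) h = 1" using rp \<rho>_def by simp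
    have h'a: "h' a = 1" and h'b: "h' b = 0" using Dab by (auto simp: h'_def D_def)
    have "dirichlet_energy E h' = ennreal (1/2 * (\<Sum>p\<in>P. (D p h')^2))"
    proof (rule energy_eq[OF fP PA])
      fix p assume "p \<in> {(u,w). E u w} - P"
      then show "D p h' = 0" using out by (simp add: Dh' h_def D_lc)
    qed
    also have "(\<Sum>p\<in>P. (D p h')^2) = BB P h h" by (simp add: Dh' BB_def power2_eq_square)
    also have "\<dots> = (\<Sum>i<r. (c i)^2)" unfolding h_def by (rule ON_lc_norm[OF on])
    also have "\<dots> = \<rho> / \<rho>^2" by (simp add: c_def power_divide sum_divide_distrib \<rho>_def)
    also have "\<dots> = 1 / \<rho>" using rp by (simp add: power2_eq_square)
    finally have "eff_conductance E a b \<le> ennreal (1/2 * (1/\<rho>))"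
      using C_le[of h' a b E] h'a h'b by simp
    then have "enn2real (eff_conductance E a b) \<le> 1/(2*\<rho>)"
      using rp by (simp add: enn2real_leI)
    moreover have "1 \<le> enn2real (eff_conductance E a b)"
      using C_bounds[OF sg fin ab] by (metis enn2real_1 enn2real_mono)
    ultimately show ?thesis unfolding eff_resistance_def \<rho>_def[symmetric] using rp
      by (simp add: field_simps)
  qed
qed

lemma R_upper:
  assumes sg: "simple_graph E" and fin: "\<And>v. finite (neighbours E v)" and ab: "E a b"
    and fP: "finite P" and PA: "P \<subseteq> {(u,w). E u w}" and on: "ON P fs r" and e: "(a,b) \<in> P"
    and span: "\<And>g. \<exists>\<beta>. \<forall>p\<in>P. D p g = (\<Sum>i<r. \<beta> i * D p (fs i))"
  shows "eff_resistance E a b \<le> 2 * (\<Sum>i<r. (D (a,b) (fs i))^2)"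
proof -
  define \<rho> where "\<rho> = (\<Sum>i<r. (D (a,b) (fs i))^2)"
  have key: "1 \<le> (\<Sum>i<r. (\<beta> i)^2) * \<rho> \<and> BB P f f = (\<Sum>i<r. (\<beta> i)^2)"
    if fa: "f a = 1" and fb: "f b = 0" and \<beta>: "\<forall>p\<in>P. D p f = (\<Sum>i<r. \<beta> i * D p (fs i))" for f \<beta>
  proof
    have "1 = D (a,b) f" using fa fb by (simp add: D_def)
    also have "\<dots> = (\<Sum>i<r. \<beta> i * D (a,b) (fs i))" using \<beta> e by auto
    finally have "1 = (\<Sum>i<r. \<beta> i * D (a,b) (fs i))^2" by simp
    also have "\<dots> \<le> (\<Sum>i<r. (\<beta> i)^2) * \<rho>" unfolding \<rho>_def by (rule Cauchy_Schwarz_ineq_sum)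
    finally show "1 \<le> (\<Sum>i<r. (\<beta> i)^2) * \<rho>" .
    have "BB P f f = BB P (lc \<beta> fs r) (lc \<beta> fs r)"
      unfolding BB_def by (rule sum.cong) (use \<beta> in \<open>auto simp: D_lc\<close>)
    then show "BB P f f = (\<Sum>i<r. (\<beta> i)^2)" using ON_lc_norm[OF on] by simp
  qed
  have anb: "a \<noteq> b" using sg ab unfolding simple_graph_def by auto
  obtain \<beta>0 where "\<forall>p\<in>P. D p (ind a) = (\<Sum>i<r. \<beta>0 i * D p (fs i))" using span by blast
  then have "1 \<le> (\<Sum>i<r. (\<beta>0 i)^2) * \<rho>" using key[of "ind a" \<beta>0] anb by (simp add: ind_def)
  then have rp: "\<rho> > 0" unfolding \<rho>_def
    by (metis less_eq_real_def mult_zero_right not_one_le_zero sum_nonneg zero_le_power2)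
  have "ennreal (1 / (2*\<rho>)) \<le> eff_conductance E a b"
  proof (rule C_ge)
    fix f :: "'a \<Rightarrow> real" assume fa: "f a = 1" and fb: "f b = 0"
    obtain \<beta> where \<beta>: "\<forall>p\<in>P. D p f = (\<Sum>i<r. \<beta> i * D p (fs i))" using span by blast
    note k = key[OF fa fb \<beta>]
    have "1/(2*\<rho>) \<le> 1/2 * (\<Sum>i<r. (\<beta> i)^2)" using k rp by (simp add: field_simps)
    also have "\<dots> = 1/2 * (\<Sum>p\<in>P. (D p f)^2)" using k by (simp add: BB_def power2_eq_square)
    finally have "ennreal (1/(2*\<rho>)) \<le> ennreal (1/2 * (\<Sum>p\<in>P. (D p f)^2))" by (rule ennreal_leI)
    also have "\<dots> \<le> dirichlet_energy E f" by (rule energy_ge[OF fP PA])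
    finally show "ennreal (1/(2*\<rho>)) \<le> dirichlet_energy E f" .
  qed
  then have "1/(2*\<rho>) \<le> enn2real (eff_conductance E a b)"
    using C_bounds(2)[OF sg fin ab] rp
    by (metis enn2real_ennreal enn2real_mono less_eq_real_def zero_le_divide_1_iff zero_le_mult_iff zero_le_numeral)
  moreover have "1 \<le> enn2real (eff_conductance E a b)"
    using C_bounds[OF sg fin ab] by (metis enn2real_1 enn2real_mono)
  ultimately show ?thesis unfolding eff_resistance_def \<rho>_def[symmetric] using rp
    by (simp add: field_simps)
qed

lemma trace:
  assumes "ON P fs r"
  shows "(\<Sum>p\<in>P. \<Sum>i<r. (D p (fs i))^2) = r"
proof -
  have "(\<Sum>p\<in>P. \<Sum>i<r. (D p (fs i))^2) = (\<Sum>i<r. BB P (fs i) (fs i))"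
    by (simp add: BB_def sum.swap[of _ P] power2_eq_square)
  also have "\<dots> = (\<Sum>i<r. 1)" using assms by (simp add: ON_def)
  finally show ?thesis by simp
qed



lemma energy_aut:
  assumes "graph_automorphism E \<sigma>"
  shows "dirichlet_energy E (f \<circ> \<sigma>) = dirichlet_energy E f"
proof -
  have bs: "bij \<sigma>" and ee: "\<And>u w. E u w \<longleftrightarrow> E (\<sigma> u) (\<sigma> w)"
    using assms unfolding graph_automorphism_def by auto
  have bt: "bij_betw (\<lambda>(u,w). (\<sigma> u, \<sigma> w)) {(u,w). E u w} {(u,w). E u w}"
  proof (rule bij_betw_imageI)
    show "inj_on (\<lambda>(u,w). (\<sigma> u, \<sigma> w)) {(u,w). E u w}"
      using bs unfolding inj_on_def bij_def by (auto dest: injD)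
    show "(\<lambda>(u,w). (\<sigma> u, \<sigma> w)) ` {(u,w). E u w} = {(u,w). E u w}"
    proof
      show "(\<lambda>(u,w). (\<sigma> u, \<sigma> w)) ` {(u,w). E u w} \<subseteq> {(u,w). E u w}" using ee by auto
      show "{(u,w). E u w} \<subseteq> (\<lambda>(u,w). (\<sigma> u, \<sigma> w)) ` {(u,w). E u w}"
      proof
        fix p assume "p \<in> {(u,w). E u w}"
        then obtain u w where p: "p = (u,w)" "E u w" by auto
        obtain u' where u': "u = \<sigma> u'" using bs by (metis bij_def surj_def)
        obtain w' where w': "w = \<sigma> w'" using bs by (metis bij_def surj_def)
        have "E u' w'" using ee p u' w' by simp
        then show "p \<in> (\<lambda>(u,w). (\<sigma> u, \<sigma> w)) ` {(u,w). E u w}" using p u' w' by force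
      qed
    qed
  qed
  have "infsum (\<lambda>x. (\<lambda>(u,w). ennreal ((f u - f w)^2)) ((\<lambda>(u,w). (\<sigma> u, \<sigma> w)) x)) {(u,w). E u w}
      = infsum (\<lambda>(u,w). ennreal ((f u - f w)^2)) {(u,w). E u w}"
    by (rule infsum_reindex_bij_betw[OF bt])
  moreover have "(\<lambda>x. (\<lambda>(u,w). ennreal ((f u - f w)^2)) ((\<lambda>(u,w). (\<sigma> u, \<sigma> w)) x))
      = (\<lambda>(u,w). ennreal (((f \<circ> \<sigma>) u - (f \<circ> \<sigma>) w)^2))" by (auto simp: o_def)
  ultimately show ?thesis unfolding dirichlet_energy_def by simp
qed

lemma C_aut:
  assumes a: "graph_automorphism E \<sigma>"
  shows "eff_conductance E (\<sigma> a) (\<sigma> b) = eff_conductance E a b"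
proof (rule antisym)
  have bs: "bij \<sigma>" using a unfolding graph_automorphism_def by auto
  show "eff_conductance E a b \<le> eff_conductance E (\<sigma> a) (\<sigma> b)"
  proof (rule C_ge)
    fix f :: "'a \<Rightarrow> real" assume "f (\<sigma> a) = 1" "f (\<sigma> b) = 0"
    then have "eff_conductance E a b \<le> dirichlet_energy E (f \<circ> \<sigma>)" by (intro C_le) auto
    then show "eff_conductance E a b \<le> dirichlet_energy E f" using energy_aut[OF a] by simp
  qed
  show "eff_conductance E (\<sigma> a) (\<sigma> b) \<le> eff_conductance E a b"
  proof (rule C_ge)
    fix g :: "'a \<Rightarrow> real" assume g: "g a = 1" "g b = 0"
    have iv: "inv \<sigma> (\<sigma> x) = x" for x using bs by (simp add: bij_is_inj)
    have "eff_conductance E (\<sigma> a) (\<sigma> b) \<le> dirichlet_energy E (g \<circ> inv \<sigma>)"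
      by (rule C_le) (use g iv in auto)
    also have "\<dots> = dirichlet_energy E (g \<circ> inv \<sigma> \<circ> \<sigma>)" using energy_aut[OF a] by simp
    also have "g \<circ> inv \<sigma> \<circ> \<sigma> = g" using iv by (auto simp: o_def)
    finally show "eff_conductance E (\<sigma> a) (\<sigma> b) \<le> dirichlet_energy E g" .
  qed
qed

definition sR :: "('a \<Rightarrow> 'a \<Rightarrow> bool) \<Rightarrow> 'a \<Rightarrow> real" where
  "sR E u = (\<Sum>x \<in> neighbours E u. eff_resistance E u x)"

lemma sR_aut:
  assumes a: "graph_automorphism E \<sigma>"
  shows "sR E (\<sigma> u) = sR E u"
proof -
  have bs: "bij \<sigma>" and ee: "\<And>u w. E u w \<longleftrightarrow> E (\<sigma> u) (\<sigma> w)"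
    using a unfolding graph_automorphism_def by auto
  have bn: "bij_betw \<sigma> (neighbours E u) (neighbours E (\<sigma> u))"
  proof (rule bij_betw_imageI)
    show "inj_on \<sigma> (neighbours E u)" using bs by (metis bij_is_inj inj_on_subset subset_UNIV)
    show "\<sigma> ` neighbours E u = neighbours E (\<sigma> u)"
    proof
      show "\<sigma> ` neighbours E u \<subseteq> neighbours E (\<sigma> u)" using ee by (auto simp: neighbours_def)
      show "neighbours E (\<sigma> u) \<subseteq> \<sigma> ` neighbours E u"
      proof
        fix w assume w: "w \<in> neighbours E (\<sigma> u)"
        obtain w' where w': "w = \<sigma> w'" using bs by (metis bij_def surj_def)
        then show "w \<in> \<sigma> ` neighbours E u" using w ee by (auto simp: neighbours_def)
      qed
    qed
  qed
  have "sR E (\<sigma> u) = (\<Sum>x \<in> neighbours E u. eff_resistance E (\<sigma> u) (\<sigma> x))"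
    unfolding sR_def by (rule sum.reindex_bij_betw[OF bn, symmetric])
  also have "\<dots> = sR E u" unfolding sR_def eff_resistance_def using C_aut[OF a] by simp
  finally show ?thesis .
qed

lemma sR_const:
  assumes "vertex_transitive E" shows "sR E u = sR E v"
proof -
  obtain \<sigma> where "graph_automorphism E \<sigma>" "\<sigma> v = u" using assms unfolding vertex_transitive_def by blast
  then show ?thesis using sR_aut by metis
qed



lemma sum_sR:
  assumes fin: "\<And>v. finite (neighbours E v)" and "finite S"
  shows "(\<Sum>u\<in>S. sR E u) = (\<Sum>p\<in>Sigma S (neighbours E). eff_resistance E (fst p) (snd p))"
  unfolding sR_def using assms by (simp add: sum.Sigma case_prod_beta)

lemma card_bd:
  assumes fin: "\<And>v. finite (neighbours E v)" and ck: "\<And>v. card (neighbours E v) = k"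
    and S: "finite S" and Q: "Q \<subseteq> Sigma (boundary E S) (neighbours E)"
  shows "card Q \<le> k * card (boundary E S)"
proof -
  have fb: "finite (boundary E S)" using S by (simp add: boundary_def)
  have "card Q \<le> card (Sigma (boundary E S) (neighbours E))"
    by (rule card_mono) (use fb fin Q in auto)
  also have "\<dots> = k * card (boundary E S)" using fb fin ck by (simp add: card_SigmaI)
  finally show ?thesis .
qed

lemma upper:
  assumes sg: "simple_graph E" and fin: "\<And>v. finite (neighbours E v)" and ck: "\<And>v. card (neighbours E v) = k"
    and S: "finite S"
  shows "(\<Sum>p\<in>Sigma S (neighbours E). eff_resistance E (fst p) (snd p)) \<le> 2 * card S + k * card (boundary E S)"
proof -
  define PS where "PS = {p \<in> S \<times> S. E (fst p) (snd p)}"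
  define Q where "Q = {p \<in> Sigma S (neighbours E). snd p \<notin> S}"
  have fS: "finite (Sigma S (neighbours E))" using S fin by auto
  have split: "Sigma S (neighbours E) = PS \<union> Q" "PS \<inter> Q = {}"
    by (auto simp: PS_def Q_def neighbours_def)
  have fPS: "finite PS" using S unfolding PS_def by (simp add: finite_subset[of _ "S \<times> S"])
  have fQ: "finite Q" using fS unfolding Q_def by simp
  have PSA: "PS \<subseteq> {(u,w). E u w}" by (auto simp: PS_def)
  obtain xs where xs: "set xs = S" "distinct xs" using finite_distinct_list[OF S] by blast
  obtain fs r where r: "r \<le> length xs" and on: "ON PS fs r"
    and sp: "\<forall>x\<in>set xs. \<exists>c. \<forall>p\<in>PS. D p (ind x) = (\<Sum>i<r. c i * D p (fs i))"
    using GS[OF fPS xs(2)] by blast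
  obtain cf where cf: "\<forall>x\<in>S. \<forall>p\<in>PS. D p (ind x) = (\<Sum>i<r. cf x i * D p (fs i))"
    using sp xs(1) by metis
  have span: "\<exists>\<beta>. \<forall>p\<in>PS. D p g = (\<Sum>i<r. \<beta> i * D p (fs i))" for g
  proof (intro exI ballI)
    fix p assume p: "p \<in> PS"
    have ev: "g y = (\<Sum>x\<in>S. g x * ind x y)" if "y \<in> S" for y
      using that S by (simp add: ind_def if_distrib sum.delta cong: if_cong)
    have "D p g = (\<Sum>x\<in>S. g x * D p (ind x))"
      using p ev[of "fst p"] ev[of "snd p"] by (auto simp: PS_def D_def sum_subtractf[symmetric] right_diff_distrib)
    also have "\<dots> = (\<Sum>x\<in>S. g x * (\<Sum>i<r. cf x i * D p (fs i)))" using cf p by auto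
    also have "\<dots> = (\<Sum>i<r. (\<Sum>x\<in>S. g x * cf x i) * D p (fs i))"
      by (simp add: sum_distrib_left sum_distrib_right sum.swap[of _ S] mult.assoc)
    finally show "D p g = (\<Sum>i<r. (\<Sum>x\<in>S. g x * cf x i) * D p (fs i))" .
  qed
  have "(\<Sum>p\<in>PS. eff_resistance E (fst p) (snd p)) \<le> (\<Sum>p\<in>PS. 2 * (\<Sum>i<r. (D p (fs i))^2))"
  proof (rule sum_mono)
    fix p assume p: "p \<in> PS"
    then obtain a b where ab: "p = (a,b)" "E a b" by (auto simp: PS_def)
    show "eff_resistance E (fst p) (snd p) \<le> 2 * (\<Sum>i<r. (D p (fs i))^2)"
      using R_upper[OF sg fin ab(2) fPS PSA on _ span] p ab by simp
  qed
  also have "\<dots> = 2 * r" using trace[OF on] by (simp add: sum_distrib_left[symmetric])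
  also have "\<dots> \<le> 2 * card S" using r xs distinct_card[OF xs(2)] by simp
  finally have i1: "(\<Sum>p\<in>PS. eff_resistance E (fst p) (snd p)) \<le> 2 * card S" .
  have "(\<Sum>p\<in>Q. eff_resistance E (fst p) (snd p)) \<le> (\<Sum>p\<in>Q. 1)"
    by (rule sum_mono) (use R_bounds[OF sg fin] in \<open>auto simp: Q_def neighbours_def\<close>)
  also have "\<dots> = card Q" by simp
  also have "card Q \<le> k * card (boundary E S)"
    by (rule card_bd[OF fin ck S]) (auto simp: Q_def boundary_def neighbours_def)
  finally have i2: "(\<Sum>p\<in>Q. eff_resistance E (fst p) (snd p)) \<le> k * card (boundary E S)"
    by (simp add: of_nat_mult[symmetric] del: of_nat_mult)
  show ?thesis unfolding split(1) using sum.union_disjoint[OF fPS fQ split(2), of "\<lambda>p. eff_resistance E (fst p) (snd p)"] i1 i2 by linarith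
qed

lemma pos_conn:
  assumes conn: "connected_graph E" and inf: "infinite (UNIV :: 'a set)" and S: "finite S"
    and PA: "\<And>u w. E u w \<Longrightarrow> u \<in> S \<or> w \<in> S \<Longrightarrow> (u,w) \<in> P"
  shows "pos P (S :: 'a set)"
  unfolding pos_def
proof (intro allI impI)
  fix g :: "'a \<Rightarrow> real" and y
  assume g0: "\<forall>y. y \<notin> S \<longrightarrow> g y = 0" and gd: "\<forall>p\<in>P. D p g = 0"
  have eq: "g u = g w" if "E u w" for u w
  proof (cases "u \<in> S \<or> w \<in> S")
    case True then show ?thesis using gd PA[OF that True] by (auto simp: D_def)
  next
    case False then show ?thesis using g0 by auto
  qed
  obtain y0 where y0: "y0 \<notin> S" using ex_new_if_finite[OF inf S] by blast
  have "E\<^sup>*\<^sup>* y0 y" using conn unfolding connected_graph_def by blast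
  then have "g y = g y0"
    by (induction rule: rtranclp_induct) (auto dest: eq)
  then show "g y = 0" using g0 y0 by simp
qed

lemma lower:
  assumes sg: "simple_graph E" and fin: "\<And>v. finite (neighbours E v)" and ck: "\<And>v. card (neighbours E v) = k"
    and conn: "connected_graph E" and inf: "infinite (UNIV :: 'a set)" and S: "finite (S :: 'a set)"
  shows "2 * real (card S) - real k * real (card (boundary E S)) \<le> (\<Sum>p\<in>Sigma S (neighbours E). eff_resistance E (fst p) (snd p))"
proof -
  have sym: "E u w \<Longrightarrow> E w u" for u w using sg unfolding simple_graph_def by auto
  define P where "P = {p. E (fst p) (snd p) \<and> (fst p \<in> S \<or> snd p \<in> S)}"
  define Q2 where "Q2 = {p. E (fst p) (snd p) \<and> fst p \<notin> S \<and> snd p \<in> S}"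
  have fS: "finite (Sigma S (neighbours E))" using S fin by auto
  have split: "P = Sigma S (neighbours E) \<union> Q2" "Sigma S (neighbours E) \<inter> Q2 = {}"
    by (auto simp: P_def Q2_def neighbours_def)
  have swQ: "prod.swap ` Q2 \<subseteq> Sigma (boundary E S) (neighbours E)"
    using sym by (auto simp: Q2_def boundary_def neighbours_def; blast)
  have fQ2: "finite Q2"
  proof -
    have "finite (boundary E S)" using S by (simp add: boundary_def)
    then have "finite (Sigma (boundary E S) (neighbours E))" using fin by auto
    then have "finite (prod.swap ` Q2)" using swQ by (rule finite_subset[rotated])
    then show ?thesis by (simp add: finite_image_iff)
  qed
  have cQ2: "card Q2 \<le> k * card (boundary E S)"
  proof -
    have "card Q2 = card (prod.swap ` Q2)" by (simp add: card_image)
    also have "\<dots> \<le> k * card (boundary E S)" by (rule card_bd[OF fin ck S swQ])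
    finally show ?thesis .
  qed
  have fP: "finite P" using split fS fQ2 by simp
  have PA: "P \<subseteq> {(u,w). E u w}" by (auto simp: P_def)
  obtain xs where xs: "set xs = S" "distinct xs" using finite_distinct_list[OF S] by blast
  have ps: "pos P S" by (rule pos_conn[OF conn inf S]) (auto simp: P_def)
  obtain fs r where on: "ON P fs r" and sup: "\<forall>i<r. \<forall>y. y \<notin> set xs \<longrightarrow> fs i y = 0"
    and rl: "pos P (set xs) \<longrightarrow> r = length xs"
    using GS[OF fP xs(2)] by blast
  have rS: "r = card S" using rl ps xs distinct_card[OF xs(2)] by simp
  have out: "D p (fs i) = 0" if "p \<in> {(u,w). E u w} - P" "i < r" for p i
    using that sup xs by (auto simp: P_def D_def)
  define \<rho> where "\<rho> p = (\<Sum>i<r. (D p (fs i))^2)" for p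
  have RL: "2 * \<rho> p \<le> eff_resistance E (fst p) (snd p)" if "E (fst p) (snd p)" for p
    using R_lower[OF sg fin that fP PA on out] by (simp add: \<rho>_def)
  have rho_le: "\<rho> p \<le> 1/2" if "E (fst p) (snd p)" for p
    using RL[OF that] R_bounds(2)[OF sg fin that] by simp
  have tr: "(\<Sum>p\<in>P. \<rho> p) = card S" using trace[OF on] rS by (simp add: \<rho>_def)
  have "(\<Sum>p\<in>Q2. \<rho> p) \<le> (\<Sum>p\<in>Q2. 1/2)" by (rule sum_mono) (use rho_le in \<open>auto simp: Q2_def\<close>)
  also have "\<dots> = card Q2 / 2" by simp
  finally have q2: "(\<Sum>p\<in>Q2. \<rho> p) \<le> card Q2 / 2" .
  have "(\<Sum>p\<in>P. \<rho> p) = (\<Sum>p\<in>Sigma S (neighbours E). \<rho> p) + (\<Sum>p\<in>Q2. \<rho> p)"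
    unfolding split(1) by (rule sum.union_disjoint[OF fS fQ2 split(2)])
  then have "2 * real (card S) - real (card Q2) \<le> 2 * (\<Sum>p\<in>Sigma S (neighbours E). \<rho> p)" using tr q2 by linarith
  also have "\<dots> = (\<Sum>p\<in>Sigma S (neighbours E). 2 * \<rho> p)" by (simp add: sum_distrib_left)
  also have "\<dots> \<le> (\<Sum>p\<in>Sigma S (neighbours E). eff_resistance E (fst p) (snd p))"
    by (rule sum_mono) (auto simp: neighbours_def intro: RL)
  finally have "2 * real (card S) - real (card Q2) \<le> (\<Sum>p\<in>Sigma S (neighbours E). eff_resistance E (fst p) (snd p))" .
  moreover have "real (card Q2) \<le> real k * card (boundary E S)"
    using cQ2 by (simp add: of_nat_mult[symmetric] del: of_nat_mult)
  ultimately show ?thesis by linarith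
qed

theorem corollary1:
  fixes E :: "'a \<Rightarrow> 'a \<Rightarrow> bool" and k :: nat and v :: 'a
  assumes "simple_graph E"
    and "infinite (UNIV :: 'a set)"
    and "connected_graph E"
    and "vertex_transitive E"
    and "smallish E"
    and "regular_graph E k"
  shows "(\<Sum>x \<in> neighbours E v. eff_resistance E v x) = 2"
proof -
  note sg = assms(1) and inf = assms(2) and conn = assms(3) and vt = assms(4)
  have fin: "\<And>v. finite (neighbours E v)" and ck: "\<And>v. card (neighbours E v) = k"
    using assms(6) unfolding regular_graph_def by auto
  obtain G :: "nat \<Rightarrow> 'a set" where G: "\<forall>m. finite (G m) \<and> G m \<subseteq> G (Suc m)" "(\<Union>m. G m) = UNIV"
    and lim: "(\<lambda>m. real (card (boundary E (G m))) / real (card (G m))) \<longlonglongrightarrow> 0"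
    using assms(5) unfolding smallish_def by blast
  define s where "s = sR E v"
  have bound: "\<bar>s - 2\<bar> \<le> real k * (real (card (boundary E S)) / real (card S))"
    if S: "finite S" and cp: "card S > 0" for S
  proof -
    have "(\<Sum>p\<in>Sigma S (neighbours E). eff_resistance E (fst p) (snd p)) = (\<Sum>u\<in>S. sR E u)"
      using sum_sR[OF fin S] by simp
    also have "\<dots> = (\<Sum>u\<in>S. s)" unfolding s_def by (rule sum.cong) (use sR_const[OF vt] in auto)
    also have "\<dots> = real (card S) * s" by simp
    finally have eq: "(\<Sum>p\<in>Sigma S (neighbours E). eff_resistance E (fst p) (snd p)) = real (card S) * s" .
    have u: "real (card S) * s \<le> 2 * real (card S) + real k * real (card (boundary E S))"
      using upper[OF sg fin ck S] eq by simp
    have l: "2 * real (card S) - real k * real (card (boundary E S)) \<le> real (card S) * s"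
      using lower[OF sg fin ck conn inf S] eq by simp
    have "real (card S) * \<bar>s - 2\<bar> \<le> real k * real (card (boundary E S))"
    proof -
      have "real (card S) * \<bar>s - 2\<bar> = \<bar>real (card S) * s - 2 * real (card S)\<bar>"
        by (metis abs_mult abs_of_nat right_diff_distrib mult.commute)
      then show ?thesis using u l by linarith
    qed
    then show ?thesis using cp by (simp add: field_simps)
  qed
  obtain m0 where m0: "v \<in> G m0" using G(2) by blast
  have ev: "\<forall>m\<ge>m0. \<bar>s - 2\<bar> \<le> real k * (real (card (boundary E (G m))) / real (card (G m)))"
  proof (intro allI impI)
    fix m assume "m0 \<le> m"
    then have "G m0 \<subseteq> G m" using lift_Suc_mono_le[of G] G(1) by blast
    then have "v \<in> G m" using m0 by blast
    then have "card (G m) > 0" using G(1) by (auto simp: card_gt_0_iff)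
    then show "\<bar>s - 2\<bar> \<le> real k * (real (card (boundary E (G m))) / real (card (G m)))"
      using bound G(1) by blast
  qed
  have "(\<lambda>m. real k * (real (card (boundary E (G m))) / real (card (G m)))) \<longlonglongrightarrow> real k * 0"
    by (rule tendsto_mult[OF tendsto_const lim])
  then have "\<bar>s - 2\<bar> \<le> real k * 0" by (rule LIMSEQ_le_const) (use ev in blast)
  then have "s = 2" by simp
  then show ?thesis by (simp add: s_def sR_def)
qed


end
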